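(* Under Rayleigh fading ($m_{\rm rd}=m_{\rm sd}=1$), for every $r>0$, $P_{\rm r}>0$ and $\mathcal C_x\in[0,1)$, \[ \mathcal P_{\rm rd}(P_{\rm r},\mathcal C_x)=1-\frac{\exp\!\left(-\frac{\Psi_r(\mathcal C_x)}{P_{\rm r}\pi_{\rm rd}(1-\mathcal C_x^2)}\right)}{P_{\rm s}\pi_{\rm sd}\frac{\Psi_r(\mathcal C_x)}{P_{\rm r}\pi_{\rm rd}(1-\mathcal C_x^2)}+1}. \] In particular, for $\mathcal C_x=0$ this equals $1-\frac{P_{\rm r}\pi_{\rm rd}e^{-\eta/(P_{\rm r}\pi_{\rm rd})}}{P_{\rm r}\pi_{\rm rd}+P_{\rm s}\pi_{\rm sd}\eta}$, and as $\mathcal C_x\to1$ it tends to $1-\frac{e^{-\gamma/(2P_{\rm r}\pi_{\rm rd})}}{\frac{\gamma P_{\rm s}\pi_{\rm sd}}{2P_{\rm r}\pi_{\rm rd}}+1}$.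
   Context: Let $P_{\rm s}>0$, $P_{\rm r}>0$. Rayleigh fading: $g_{\rm rd},g_{\rm sd}$ are independent exponential random variables with means $\pi_{\rm rd},\pi_{\rm sd}>0$. For $\mathcal C_x\in[0,1)$ define $R_{\rm rd}(P_{\rm r},\mathcal C_x)=\tfrac12\log_2\frac{(P_{\rm r}g_{\rm rd}+P_{\rm s}g_{\rm sd}+1)^2-(P_{\rm r}g_{\rm rd}\mathcal C_x)^2}{(P_{\rm s}g_{\rm sd}+1)^2}$. For a target rate $r>0$ put $\gamma=2^{2r}-1$, $\eta=2^r-1$ and $\Psi_r(x)=\sqrt{1+\gamma(1-x^2)}-1$. The R–D outage probability is $\mathcal P_{\rm rd}=\mathbb P\{R_{\rm rd}<r\}$. *)

theory Defs
  imports "HOL-Probability.Probability"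
begin

definition R_rd :: "real \<Rightarrow> real \<Rightarrow> real \<Rightarrow> real \<Rightarrow> real \<Rightarrow> real" where
  "R_rd Ps Pr Cx grd gsd =
     1/2 * log 2 (((Pr * grd + Ps * gsd + 1)^2 - (Pr * grd * Cx)^2) / (Ps * gsd + 1)^2)"

definition gam :: "real \<Rightarrow> real" where "gam r = 2 powr (2 * r) - 1"
definition eta :: "real \<Rightarrow> real" where "eta r = 2 powr r - 1"
definition Psi :: "real \<Rightarrow> real \<Rightarrow> real" where
  "Psi r x = sqrt (1 + gam r * (1 - x^2)) - 1"

definition P_rd :: "'a measure \<Rightarrow> ('a \<Rightarrow> real) \<Rightarrow> ('a \<Rightarrow> real) \<Rightarrow> real \<Rightarrow> real \<Rightarrow> real \<Rightarrow> real \<Rightarrow> real" where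
  "P_rd M grd gsd Ps Pr Cx r = measure M {\<omega> \<in> space M. R_rd Ps Pr Cx (grd \<omega>) (gsd \<omega>) < r}"

end

theory Submission
  imports Defs
begin


lemma nn_int_expdens: "l > 0 \<Longrightarrow> (\<integral>\<^sup>+ x. ennreal (exponential_density l x) \<partial>lborel) = 1"
proof -
  assume l: "l > 0"
  interpret P: prob_space "density lborel (exponential_density l)"
    using prob_space_exponential_density[OF l] .
  have "emeasure (density lborel (exponential_density l)) UNIV = 1"
    using P.emeasure_space_1 by simp
  then show ?thesis by (simp add: emeasure_density)
qed

lemma outage_prob:
  fixes M :: "'a measure" and X Y :: "'a \<Rightarrow> real"
  assumes P: "prob_space M" and l1: "l1 > 0" and l2: "l2 > 0"
   and DX: "distributed M lborel X (\<lambda>x. ennreal (exponential_density l1 x))"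
   and DY: "distributed M lborel Y (\<lambda>x. ennreal (exponential_density l2 x))"
   and ind: "prob_space.indep_var M borel X borel Y"
   and c: "c \<ge> 0" and s: "sp \<ge> 0"
  shows "measure M {\<omega>\<in>space M. X \<omega> < c*(sp*Y \<omega>+1)} = 1 - exp (- l1*c) * l2/(l2 + l1*c * sp)"
proof -
  interpret prob_space M by fact
  have ind': "indep_var lborel X lborel Y" using ind by (simp add: indep_var_eq)
  have J: "distributed M (lborel \<Otimes>\<^sub>M lborel) (\<lambda>\<omega>. (X \<omega>, Y \<omega>))
      (\<lambda>(x,y). ennreal (exponential_density l1 x) * ennreal (exponential_density l2 y))"
    by (rule distributed_joint_indep[OF sigma_finite_lborel sigma_finite_lborel DX DY ind'])
  define B where "B = {(x::real, y::real). x < c*(sp*y+1)}"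
  have B2: "B = {p\<in>space (lborel \<Otimes>\<^sub>M lborel). fst p < c*(sp * snd p+1)}"
    by (auto simp: B_def space_pair_measure)
  have Bm[measurable]: "B \<in> sets (lborel \<Otimes>\<^sub>M lborel)" unfolding B2 by measurable
  have meas: "(\<lambda>p. (\<lambda>(x,y). ennreal (exponential_density l1 x) * ennreal (exponential_density l2 y)) p * indicator B p) \<in> borel_measurable (lborel \<Otimes>\<^sub>M lborel)"
    by measurable
  have ev: "{\<omega>\<in>space M. X \<omega> < c*(sp*Y \<omega>+1)} = (\<lambda>\<omega>. (X \<omega>, Y \<omega>)) -` B \<inter> space M"
    by (auto simp: B_def)
  define L where "L = l2 + l1*c * sp"
  have L: "L > 0" using l1 l2 c s by (simp add: L_def add_pos_nonneg)
  define K where "K = exp (- l1*c) * l2/L"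
  have K: "K \<ge> 0" using L l2 by (simp add: K_def)
  define h where "h = (\<lambda>y. exponential_density l2 y * (1 - exp (- l1*(c*(sp*y+1)))))"
  have "emeasure M {\<omega>\<in>space M. X \<omega> < c*(sp*Y \<omega>+1)}
     = (\<integral>\<^sup>+ p. (\<lambda>(x,y). ennreal (exponential_density l1 x) * ennreal (exponential_density l2 y)) p * indicator B p \<partial>(lborel \<Otimes>\<^sub>M lborel))"
    unfolding ev by (rule distributed_emeasure[OF J Bm])
  also have "\<dots> = (\<integral>\<^sup>+ y. (\<integral>\<^sup>+ x. ennreal (exponential_density l1 x) * ennreal (exponential_density l2 y) * indicator B (x,y) \<partial>lborel) \<partial>lborel)"
    using lborel_pair.nn_integral_snd[OF meas] by simp
  also have "\<dots> = (\<integral>\<^sup>+ y. ennreal (h y) \<partial>lborel)"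
  proof (rule nn_integral_cong)
    fix y :: real
    have "(\<integral>\<^sup>+ x. ennreal (exponential_density l1 x) * ennreal (exponential_density l2 y) * indicator B (x,y) \<partial>lborel)
        = (\<integral>\<^sup>+ x. ennreal (exponential_density l2 y) * (ennreal (exponential_density l1 x) * indicator {..c*(sp*y+1)} x) \<partial>lborel)"
      apply (rule nn_integral_cong_AE)
      using AE_lborel_singleton[of "c*(sp*y+1)"]
      by eventually_elim (auto simp: B_def mult.commute split: split_indicator)
    also have "\<dots> = ennreal (exponential_density l2 y) * (\<integral>\<^sup>+ x. ennreal (exponential_density l1 x) * indicator {..c*(sp*y+1)} x \<partial>lborel)"
      by (rule nn_integral_cmult) auto
    also have "\<dots> = ennreal (exponential_density l2 y) * ennreal (erlang_CDF 0 l1 (c*(sp*y+1)))"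
      by (simp add: nn_integral_erlang_density[OF l1])
    also have "\<dots> = ennreal (h y)"
    proof (cases "y < 0")
      case True then show ?thesis by (simp add: h_def erlang_density_def)
    next
      case False
      then have "c*(sp*y+1) \<ge> 0" using c s by simp
      then show ?thesis using l1 l2 False
        by (simp add: h_def erlang_CDF_0 ennreal_mult[symmetric] mult_less_0_iff)
    qed
    finally show "(\<integral>\<^sup>+ x. ennreal (exponential_density l1 x) * ennreal (exponential_density l2 y) * indicator B (x,y) \<partial>lborel) = ennreal (h y)" .
  qed
  finally have E: "emeasure M {\<omega>\<in>space M. X \<omega> < c*(sp*Y \<omega>+1)} = (\<integral>\<^sup>+ y. ennreal (h y) \<partial>lborel)" .
  have pw: "ennreal (h y) + ennreal (K * exponential_density L y) = ennreal (exponential_density l2 y)" for y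
  proof (cases "y < 0")
    case True then show ?thesis by (simp add: h_def erlang_density_def)
  next
    case False
    have h0: "h y \<ge> 0" using False l1 l2 c s by (simp add: h_def mult_less_0_iff)
    have ed2: "exponential_density l2 y = l2 * exp (- (y*l2))"
      using False by (simp add: erlang_density_def mult.commute)
    have edL: "exponential_density L y = L * exp (- (y*L))"
      using False by (simp add: erlang_density_def mult.commute)
    have e1: "exp (- (y * L)) = exp (- (y*l2)) * exp (- (l1*c * sp*y))"
      by (simp add: L_def exp_add[symmetric] algebra_simps)
    have e2: "exp (- (l1*(c*(sp*y+1)))) = exp (- (l1*c)) * exp (- (l1*c * sp*y))"
      by (simp add: exp_add[symmetric] algebra_simps)
    have "h y + K * exponential_density L y = exponential_density l2 y"
      unfolding h_def K_def ed2 edL e2 e1 using L by (simp add: field_simps exp_diff exp_minus)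
    then show ?thesis using h0 K L by (simp add: ennreal_plus[symmetric] del: ennreal_plus)
  qed
  have "(\<integral>\<^sup>+ y. ennreal (h y) \<partial>lborel) + (\<integral>\<^sup>+ y. ennreal (K * exponential_density L y) \<partial>lborel)
      = (\<integral>\<^sup>+ y. ennreal (exponential_density l2 y) \<partial>lborel)"
  proof -
    have "(\<integral>\<^sup>+ y. ennreal (h y) + ennreal (K * exponential_density L y) \<partial>lborel)
       = (\<integral>\<^sup>+ y. ennreal (h y) \<partial>lborel) + (\<integral>\<^sup>+ y. ennreal (K * exponential_density L y) \<partial>lborel)"
      by (rule nn_integral_add) (auto simp: h_def)
    moreover have "(\<integral>\<^sup>+ y. ennreal (h y) + ennreal (K * exponential_density L y) \<partial>lborel)
       = (\<integral>\<^sup>+ y. ennreal (exponential_density l2 y) \<partial>lborel)" by (simp only: pw)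
    ultimately show ?thesis by simp
  qed
  also have "\<dots> = 1" by (rule nn_int_expdens[OF l2])
  finally have S0: "(\<integral>\<^sup>+ y. ennreal (h y) \<partial>lborel) + (\<integral>\<^sup>+ y. ennreal (K * exponential_density L y) \<partial>lborel) = 1" .
  have "(\<integral>\<^sup>+ y. ennreal (K * exponential_density L y) \<partial>lborel) = (\<integral>\<^sup>+ y. ennreal K * ennreal (exponential_density L y) \<partial>lborel)"
    using K L by (simp add: ennreal_mult exponential_density_nonneg)
  also have "\<dots> = ennreal K" by (simp add: nn_integral_cmult nn_int_expdens[OF L])
  finally have S: "(\<integral>\<^sup>+ y. ennreal (h y) \<partial>lborel) + ennreal K = 1" using S0 by simp
  have "ennreal (measure M {\<omega>\<in>space M. X \<omega> < c*(sp*Y \<omega>+1)} + K) = ennreal 1"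
    using S E K by (simp add: emeasure_eq_measure ennreal_plus)
  then have "measure M {\<omega>\<in>space M. X \<omega> < c*(sp*Y \<omega>+1)} + K = 1"
    using K by (subst (asm) ennreal_inj) auto
  then show ?thesis by (simp add: K_def L_def)
qed


lemma gam_pos: "r > 0 \<Longrightarrow> gam r > 0"
  unfolding gam_def by simp

lemma quad_equiv:
  fixes A u D g :: real
  assumes A: "A \<ge> 0" and u: "u > 0" and D: "D > 0" and g: "g > 0"
  shows "D*A^2 + 2*A*u - g*u^2 < 0 \<longleftrightarrow> A < u * (sqrt (1 + g*D) - 1) / D"
proof -
  define S where "S = sqrt (1 + g*D)"
  have S2: "S^2 = 1 + g*D" unfolding S_def using g D by simp
  have S1: "S > 1" unfolding S_def using g D by simp
  have fac: "D*A^2 + 2*A*u - g*u^2 = (D*A - u*(S-1)) * (D*A + u*(S+1)) / D"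
  proof -
    have "(D*A - u*(S-1)) * (D*A + u*(S+1)) = D*(D*A^2 + 2*A*u) - u^2*(S^2 - 1)"
      by (simp add: algebra_simps power2_eq_square)
    also have "\<dots> = D*(D*A^2 + 2*A*u - g*u^2)" using S2 by (simp add: algebra_simps)
    finally show ?thesis using D by simp
  qed
  have pos: "D*A + u*(S+1) > 0" using A u D S1 by (simp add: add_nonneg_pos)
  have "D*A^2 + 2*A*u - g*u^2 < 0 \<longleftrightarrow> D*A - u*(S-1) < 0"
    unfolding fac using pos D by (simp add: divide_less_0_iff mult_less_0_iff)
  also have "\<dots> \<longleftrightarrow> A < u*(S-1)/D" using D by (simp add: field_simps)
  finally show ?thesis by (simp add: S_def)
qed

lemma rate_equiv:
  fixes r Pr Ps C x y :: real
  assumes r: "r > 0" and Pr: "Pr > 0" and Ps: "Ps > 0" and C0: "0 \<le> C" and C1: "C < 1"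
    and x: "x \<ge> 0" and y: "y \<ge> 0"
  shows "R_rd Ps Pr C x y < r \<longleftrightarrow> x < Psi r C / (Pr * (1 - C^2)) * (Ps * y + 1)"
proof -
  define A where "A = Pr * x"
  define u where "u = Ps * y + 1"
  define D where "D = 1 - C^2"
  define g where "g = gam r"
  have A: "A \<ge> 0" using Pr x by (simp add: A_def)
  have u: "u > 0" using Ps y by (simp add: u_def add_nonneg_pos)
  have D: "D > 0" using C0 C1 by (simp add: D_def power_less_one_iff abs_square_less_1)
  have g: "g > 0" using gam_pos[OF r] by (simp add: g_def)
  have C2: "C^2 \<le> 1" using D by (simp add: D_def)
  have "(A*C)^2 \<le> A^2" using C2 A by (simp add: power_mult_distrib mult_left_le)
  moreover have "(A+u)^2 - A^2 = u*(2*A+u)" by (simp add: power2_eq_square algebra_simps)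
  moreover have "u*(2*A+u) > 0" using A u by (simp add: add_nonneg_pos)
  ultimately have N: "(A+u)^2 - (A*C)^2 > 0" by linarith
  have Q: "((A+u)^2 - (A*C)^2) / u^2 > 0" using N u by simp
  have e: "Pr * x + Ps * y + 1 = A + u" by (simp add: A_def u_def)
  have "R_rd Ps Pr C x y < r \<longleftrightarrow> log 2 (((A+u)^2 - (A*C)^2) / u^2) < 2*r"
    unfolding R_rd_def e by (simp add: A_def u_def) linarith
  also have "\<dots> \<longleftrightarrow> ((A+u)^2 - (A*C)^2) / u^2 < 2 powr (2*r)"
    by (rule log_less_iff) (use Q in auto)
  also have "\<dots> \<longleftrightarrow> (A+u)^2 - (A*C)^2 < (g+1) * u^2"
    using u by (simp add: pos_divide_less_eq g_def gam_def)
  also have "\<dots> \<longleftrightarrow> D*A^2 + 2*A*u - g*u^2 < 0"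
    by (simp add: D_def power2_eq_square algebra_simps)
  also have "\<dots> \<longleftrightarrow> A < u * (sqrt (1 + g*D) - 1) / D" by (rule quad_equiv[OF A u D g])
  also have "\<dots> \<longleftrightarrow> x < Psi r C / (Pr * (1 - C^2)) * (Ps * y + 1)"
    using Pr D by (simp add: A_def u_def D_def g_def Psi_def field_simps)
  finally show ?thesis .
qed

lemma Psi_nonneg: "r > 0 \<Longrightarrow> 0 \<le> C \<Longrightarrow> C < 1 \<Longrightarrow> Psi r C \<ge> 0"
proof -
  assume r: "r > 0" and C: "0 \<le> C" "C < 1"
  have "C^2 < 1" using C by (simp add: power_less_one_iff abs_square_less_1)
  then have "1 \<le> 1 + gam r * (1 - C^2)" using gam_pos[OF r] by simp
  then show ?thesis unfolding Psi_def by simp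
qed

lemma Psi_div: "r > 0 \<Longrightarrow> 0 \<le> C \<Longrightarrow> C < 1 \<Longrightarrow>
   Psi r C / (1 - C^2) = gam r / (sqrt (1 + gam r * (1 - C^2)) + 1)"
proof -
  assume r: "r > 0" and C: "0 \<le> C" "C < 1"
  have D: "1 - C^2 > 0" using C by (simp add: power_less_one_iff abs_square_less_1)
  define S where "S = sqrt (1 + gam r * (1 - C^2))"
  have "0 \<le> gam r * (1 - C^2)" using gam_pos[OF r] D by simp
  then have nn: "0 \<le> 1 + gam r * (1 - C^2)" by linarith
  then have S2: "S^2 = 1 + gam r * (1 - C^2)" unfolding S_def by simp
  have S0: "S \<ge> 0" unfolding S_def using nn by simp
  have "(S - 1) * (S + 1) = gam r * (1 - C^2)" using S2 by (simp add: power2_eq_square algebra_simps)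
  then show ?thesis using D S0 unfolding Psi_def S_def[symmetric]
    by (simp add: field_simps)
qed

lemma part1:
  fixes M :: "'a measure" and grd gsd :: "'a \<Rightarrow> real"
    and Ps pi_rd pi_sd :: real
  assumes P: "prob_space M"
    and Ps: "Ps > 0" and prd: "pi_rd > 0" and psd: "pi_sd > 0"
    and DX: "distributed M lborel grd (\<lambda>x. ennreal (exponential_density (1 / pi_rd) x))"
    and DY: "distributed M lborel gsd (\<lambda>x. ennreal (exponential_density (1 / pi_sd) x))"
    and ind: "prob_space.indep_var M borel grd borel gsd"
    and r: "r > 0" and Pr: "Pr > 0" and C0: "0 \<le> Cx" and C1: "Cx < 1"
  shows "P_rd M grd gsd Ps Pr Cx r =
          1 - exp (- (Psi r Cx / (Pr * pi_rd * (1 - Cx^2))))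
              / (Ps * pi_sd * (Psi r Cx / (Pr * pi_rd * (1 - Cx^2))) + 1)"
proof -
  interpret prob_space M by fact
  have [measurable]: "grd \<in> borel_measurable M" using distributed_measurable[OF DX] by simp
  have [measurable]: "gsd \<in> borel_measurable M" using distributed_measurable[OF DY] by simp
  define c where "c = Psi r Cx / (Pr * (1 - Cx^2))"
  have D: "1 - Cx^2 > 0" using C0 C1 by (simp add: power_less_one_iff abs_square_less_1)
  have c: "c \<ge> 0" unfolding c_def using Psi_nonneg[OF r C0 C1] Pr D by simp
  have AX: "AE \<omega> in M. 0 \<le> grd \<omega>"
    by (subst distributed_AE2[OF DX]) (auto simp: erlang_density_def)
  have AY: "AE \<omega> in M. 0 \<le> gsd \<omega>"
    by (subst distributed_AE2[OF DY]) (auto simp: erlang_density_def)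
  have "P_rd M grd gsd Ps Pr Cx r = measure M {\<omega>\<in>space M. grd \<omega> < c * (Ps * gsd \<omega> + 1)}"
    unfolding P_rd_def
  proof (rule measure_eq_AE)
    show "AE \<omega> in M. (\<omega> \<in> {\<omega> \<in> space M. R_rd Ps Pr Cx (grd \<omega>) (gsd \<omega>) < r}) =
        (\<omega> \<in> {\<omega> \<in> space M. grd \<omega> < c * (Ps * gsd \<omega> + 1)})"
      using AX AY by eventually_elim (simp add: rate_equiv[OF r Pr Ps C0 C1] c_def)
    show "{\<omega> \<in> space M. R_rd Ps Pr Cx (grd \<omega>) (gsd \<omega>) < r} \<in> sets M"
      unfolding R_rd_def by measurable
    show "{\<omega> \<in> space M. grd \<omega> < c * (Ps * gsd \<omega> + 1)} \<in> sets M" by measurable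
  qed
  also have "\<dots> = 1 - exp (- (1/pi_rd) * c) * (1/pi_sd) / ((1/pi_sd) + (1/pi_rd) * c * Ps)"
    by (rule outage_prob[OF P _ _ DX DY ind c]) (use Ps prd psd in auto)
  also have "\<dots> = 1 - exp (- (Psi r Cx / (Pr * pi_rd * (1 - Cx^2))))
              / (Ps * pi_sd * (Psi r Cx / (Pr * pi_rd * (1 - Cx^2))) + 1)"
  proof -
    define t where "t = Psi r Cx / (Pr * pi_rd * (1 - Cx^2))"
    have "t = c / pi_rd" unfolding t_def c_def by simp
    then have t: "t \<ge> 0" using c prd by simp
    have ct: "(1/pi_rd) * c = t" unfolding t_def c_def by simp
    have "(1/pi_sd) * c * Ps / (1/pi_rd) = 0 \<or> True" by simp
    have ct2: "(1/pi_rd) * c * Ps = t * Ps" using ct by simp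
    have "exp (- (1/pi_rd) * c) * (1/pi_sd) / ((1/pi_sd) + (1/pi_rd) * c * Ps)
        = exp (- t) / (Ps * pi_sd * t + 1)"
      unfolding ct2 using ct psd t Ps by (simp add: field_simps add_pos_nonneg)
    then show ?thesis by (simp add: t_def)
  qed
  finally show ?thesis .
qed


theorem corollary1:
  fixes M :: "'a measure" and grd gsd :: "'a \<Rightarrow> real"
    and Ps pi_rd pi_sd :: real
  assumes "prob_space M"
    and "Ps > 0" and "pi_rd > 0" and "pi_sd > 0"
    and "distributed M lborel grd (\<lambda>x. ennreal (exponential_density (1 / pi_rd) x))"
    and "distributed M lborel gsd (\<lambda>x. ennreal (exponential_density (1 / pi_sd) x))"
    and "prob_space.indep_var M borel grd borel gsd"
  shows "\<forall>r > 0. \<forall>Pr > 0.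
     (\<forall>Cx \<in> {0..<1}.
        P_rd M grd gsd Ps Pr Cx r =
          1 - exp (- (Psi r Cx / (Pr * pi_rd * (1 - Cx^2))))
              / (Ps * pi_sd * (Psi r Cx / (Pr * pi_rd * (1 - Cx^2))) + 1))
   \<and> P_rd M grd gsd Ps Pr 0 r =
       1 - Pr * pi_rd * exp (- eta r / (Pr * pi_rd)) / (Pr * pi_rd + Ps * pi_sd * eta r)
   \<and> ((\<lambda>Cx. P_rd M grd gsd Ps Pr Cx r) \<longlongrightarrow>
       1 - exp (- gam r / (2 * Pr * pi_rd)) / (gam r * Ps * pi_sd / (2 * Pr * pi_rd) + 1))
      (at_left 1)"
  proof (intro allI impI conjI ballI)
  fix r Pr :: real assume r: "r > 0" and Pr: "Pr > 0"
  note P1 = part1[OF assms r Pr]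
  {
    fix Cx :: real assume "Cx \<in> {0..<1}"
    then show "P_rd M grd gsd Ps Pr Cx r =
          1 - exp (- (Psi r Cx / (Pr * pi_rd * (1 - Cx^2))))
              / (Ps * pi_sd * (Psi r Cx / (Pr * pi_rd * (1 - Cx^2))) + 1)"
      using P1 by auto
  }
  have e: "Psi r 0 = eta r"
  proof -
    have "2 powr (2*r) = (2 powr r)^2" by (simp add: power2_eq_square powr_add[symmetric])
    then show ?thesis by (simp add: Psi_def gam_def eta_def)
  qed
  have eta0: "eta r \<ge> 0" using r powr_mono[of 0 r 2] by (simp add: eta_def)
  show "P_rd M grd gsd Ps Pr 0 r =
       1 - Pr * pi_rd * exp (- eta r / (Pr * pi_rd)) / (Pr * pi_rd + Ps * pi_sd * eta r)"
    using P1[of 0] e eta0 assms(2-4) Pr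
    by (simp add: field_simps add_pos_nonneg)
  define H where "H = (\<lambda>x. 1 - exp (- (gam r / (sqrt (1 + gam r * (1 - x^2)) + 1) / (Pr * pi_rd)))
      / (Ps * pi_sd * (gam r / (sqrt (1 + gam r * (1 - x^2)) + 1) / (Pr * pi_rd)) + 1))"
  have ev: "eventually (\<lambda>x. H x = P_rd M grd gsd Ps Pr x r) (at_left 1)"
  proof -
    have "eventually (\<lambda>x. x \<in> {0<..<1}) (at_left (1::real))"
      by (rule eventually_at_left_real) simp
    then show ?thesis
  proof eventually_elim
    case (elim x)
    then have x: "0 \<le> x" "x < 1" by auto
    have "Psi r x / (Pr * pi_rd * (1 - x^2)) = (Psi r x / (1 - x^2)) / (Pr * pi_rd)" by simp
    then show ?case using P1[OF x] Psi_div[OF r x] by (simp add: H_def)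
  qed
  qed
  have g: "gam r > 0" using gam_pos[OF r] .
  have lim: "(H \<longlongrightarrow> 1 - exp (- (gam r / (sqrt (1 + gam r * (1 - 1^2)) + 1) / (Pr * pi_rd)))
      / (Ps * pi_sd * (gam r / (sqrt (1 + gam r * (1 - 1^2)) + 1) / (Pr * pi_rd)) + 1)) (at_left 1)"
  proof -
    have pos: "0 < Ps * pi_sd * gam r / (2 * (Pr * pi_rd))" using g assms(2-4) Pr by simp
    then have ne: "Ps * pi_sd * gam r / (2 * (Pr * pi_rd)) + 1 \<noteq> 0" by linarith
    show ?thesis unfolding H_def using g assms(2-4) Pr
      by (intro tendsto_intros) (use ne in \<open>auto simp: add_pos_nonneg\<close>)
  qed
  have v: "1 - exp (- (gam r / (sqrt (1 + gam r * (1 - 1^2)) + 1) / (Pr * pi_rd)))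
      / (Ps * pi_sd * (gam r / (sqrt (1 + gam r * (1 - 1^2)) + 1) / (Pr * pi_rd)) + 1)
     = 1 - exp (- gam r / (2 * Pr * pi_rd)) / (gam r * Ps * pi_sd / (2 * Pr * pi_rd) + 1)"
    by (simp add: field_simps)
  show "((\<lambda>Cx. P_rd M grd gsd Ps Pr Cx r) \<longlongrightarrow>
       1 - exp (- gam r / (2 * Pr * pi_rd)) / (gam r * Ps * pi_sd / (2 * Pr * pi_rd) + 1))
      (at_left 1)"
    using tendsto_cong[OF ev] lim v by simp
qed


end
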